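(* Let $G=(V,E)$ be a finite graph and consider the graphical representation of the rescaled SEIS process on $G$ with parameters $\lambda>0,\tau>0$. Then for each $T>0$, with probability tending to $1$ as $\tau\to\infty$, the following holds: for every onset label $\star$ at a point $(x,t)\in\mathcal{S}$ with $t\le T$ there is a $t'>t$ and a recovery label $\times$ at $(x,t')$ such that there are no onset labels in $V\times(t,t']$.
   Context: The spacetime set is $\mathcal{S}=V\times[0,\infty)$. The graphical representation of the rescaled SEIS process consists of independent Poisson point processes along the fibres: at each site $x\in V$, recovery labels $\times$ with intensity $\tau$ and onset labels $\star$ with intensity $1$; along each edge $xy\in E$, transmission labels $\leftrightarrow$ with intensity $\lambda\tau$. *)

theory Defs
  imports "HOL-Probability.Probability"
begin

text \<open>Fibres of the graphical representation: recovery labels and onset labels at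
  a site, transmission labels along an (unordered) edge.\<close>
datatype 'v fibre = Rec 'v | Ons 'v | Tr "'v set"

definition finite_graph :: "'v set \<Rightarrow> 'v set set \<Rightarrow> bool" where
  "finite_graph V E \<longleftrightarrow> finite V \<and> (\<forall>e\<in>E. e \<subseteq> V \<and> card e = 2)"

definition ppp_family ::
  "'w measure \<Rightarrow> 'i set \<Rightarrow> ('i \<Rightarrow> real) \<Rightarrow> ('i \<Rightarrow> 'w \<Rightarrow> real set) \<Rightarrow> bool" where
  "ppp_family M I r N \<longleftrightarrow>
     prob_space M \<and>
     (\<forall>i\<in>I. \<forall>\<omega>\<in>space M. N i \<omega> \<subseteq> {0<..} \<and> (\<forall>b. finite (N i \<omega> \<inter> {..b}))) \<and>
     (\<forall>i\<in>I. \<forall>a b. 0 \<le> a \<longrightarrow> a < b \<longrightarrow>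
        distr M (count_space UNIV) (\<lambda>\<omega>. card (N i \<omega> \<inter> {a<..b}))
          = measure_pmf (poisson_pmf (r i * (b - a)))) \<and>
     (\<forall>J. J \<subseteq> {(i, a, b). i \<in> I \<and> 0 \<le> a \<and> a < b} \<longrightarrow>
        (\<forall>(i, a, b)\<in>J. \<forall>(i', a', b')\<in>J. (i, a, b) \<noteq> (i', a', b') \<longrightarrow> i = i' \<longrightarrow>
            {a<..b} \<inter> {a'<..b'} = {}) \<longrightarrow>
        prob_space.indep_vars M (\<lambda>_. count_space UNIV)
          (\<lambda>(i, a, b) \<omega>. card (N i \<omega> \<inter> {a<..b})) J)"

definition graphical_rep ::
  "'w measure \<Rightarrow> 'v set \<Rightarrow> 'v set set \<Rightarrow> real \<Rightarrow> real \<Rightarrow> ('v fibre \<Rightarrow> 'w \<Rightarrow> real set) \<Rightarrow> bool" where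
  "graphical_rep M V E lam \<tau> N \<longleftrightarrow>
     ppp_family M (Rec ` V \<union> Ons ` V \<union> Tr ` E)
       (\<lambda>i. case i of Rec _ \<Rightarrow> \<tau> | Ons _ \<Rightarrow> 1 | Tr _ \<Rightarrow> lam * \<tau>) N"

end

theory Submission
  imports Defs "HOL-Real_Asymp.Real_Asymp"
begin


definition has :: "real set \<Rightarrow> nat \<Rightarrow> bool" where
  "has A k \<longleftrightarrow> (\<exists>n::nat. k \<le> card (A \<inter> {..real n}))"

definition kth :: "real set \<Rightarrow> nat \<Rightarrow> real" where
  "kth A k = (if has A k then (LEAST t. t \<in> A \<and> k \<le> card (A \<inter> {..t})) else 0)"

lemma max_cut:
  assumes "finite (A \<inter> {..v::real})" "A \<inter> {..v} \<noteq> {}"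
  shows "Max (A \<inter> {..v}) \<in> A" "Max (A \<inter> {..v}) \<le> v" "A \<inter> {..Max (A \<inter> {..v})} = A \<inter> {..v}"
proof -
  have m: "Max (A \<inter> {..v}) \<in> A \<inter> {..v}" using assms Max_in by blast
  then show "Max (A \<inter> {..v}) \<in> A" "Max (A \<inter> {..v}) \<le> v" by auto
  show "A \<inter> {..Max (A \<inter> {..v})} = A \<inter> {..v}"
    using m assms Max_ge by fastforce
qed

lemma kth_props:
  assumes fin: "\<forall>b. finite (A \<inter> {..b})" and k: "1 \<le> k" and h: "has A k"
  shows "kth A k \<in> A" "kth A k \<le> v \<longleftrightarrow> k \<le> card (A \<inter> {..v})"
proof -
  obtain n where kn: "k \<le> card (A \<inter> {..real n})" using h has_def by auto
  define B where "B = {t \<in> A \<inter> {..real n}. k \<le> card (A \<inter> {..t})}"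
  have finB: "finite B" unfolding B_def by (rule finite_subset[OF _ fin[rule_format, of "real n"]]) auto
  have ne: "A \<inter> {..real n} \<noteq> {}" using kn k by auto
  have "Max (A \<inter> {..real n}) \<in> B"
    using max_cut[OF _ ne] fin kn unfolding B_def by auto
  then have Bne: "B \<noteq> {}" by auto
  define m where "m = Min B"
  have mB: "m \<in> B" unfolding m_def using finB Bne Min_in by blast
  have least: "(LEAST t. t \<in> A \<and> k \<le> card (A \<inter> {..t})) = m"
  proof (rule Least_equality)
    show "m \<in> A \<and> k \<le> card (A \<inter> {..m})" using mB B_def by auto
    fix y assume y: "y \<in> A \<and> k \<le> card (A \<inter> {..y})"
    show "m \<le> y"
    proof (rule ccontr)
      assume "\<not> m \<le> y"
      then have "y \<in> B" using y mB unfolding B_def by auto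
      then have "m \<le> y" unfolding m_def using finB by simp
      then show False using \<open>\<not> m \<le> y\<close> by simp
    qed
  qed
  have kth: "kth A k = m" using least h kth_def by simp
  show "kth A k \<in> A" using kth mB B_def by auto
  show "kth A k \<le> v \<longleftrightarrow> k \<le> card (A \<inter> {..v})"
  proof
    assume "kth A k \<le> v"
    then have "A \<inter> {..m} \<subseteq> A \<inter> {..v}" using kth by auto
    then have "card (A \<inter> {..m}) \<le> card (A \<inter> {..v})" using fin card_mono by blast
    then show "k \<le> card (A \<inter> {..v})" using mB B_def by auto
  next
    assume kv: "k \<le> card (A \<inter> {..v})"
    show "kth A k \<le> v"
    proof (rule ccontr)
      assume "\<not> kth A k \<le> v"
      then have vm: "v < m" using kth by simp
      have nev: "A \<inter> {..v} \<noteq> {}" using kv k by auto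
      note mc = max_cut[OF _ nev]
      have "Max (A \<inter> {..v}) \<in> B"
        using mc fin kv vm mB unfolding B_def by auto
      then have "m \<le> Max (A \<inter> {..v})" unfolding m_def using finB by simp
      then show False using mc fin vm by force
    qed
  qed
qed

lemma kth_surj:
  assumes fin: "\<forall>b. finite (A \<inter> {..b})" and t: "t \<in> A"
  shows "\<exists>k. has A (Suc k) \<and> kth A (Suc k) = t"
proof -
  define c where "c = card (A \<inter> {..t})"
  have c1: "1 \<le> c" unfolding c_def using t fin by (metis One_nat_def Suc_leI atMost_iff card_gt_0_iff disjoint_iff order_refl)
  have "A \<inter> {..t} \<subseteq> A \<inter> {..real (nat \<lceil>t\<rceil>)}" by (auto intro: order_trans[OF _ real_nat_ceiling_ge])
  then have "c \<le> card (A \<inter> {..real (nat \<lceil>t\<rceil>)})" unfolding c_def using fin card_mono by blast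
  then have hc: "has A c" unfolding has_def by blast
  note kp = kth_props[OF fin c1 hc]
  have le: "kth A c \<le> t" using kp(2)[of t] c_def by simp
  have "kth A c = t"
  proof (rule ccontr)
    assume "kth A c \<noteq> t"
    then have lt: "kth A c < t" using le by simp
    have "A \<inter> {..kth A c} \<subseteq> A \<inter> {..t}" "t \<notin> A \<inter> {..kth A c}" "t \<in> A \<inter> {..t}" using lt t by auto
    then have "A \<inter> {..kth A c} \<subset> A \<inter> {..t}" by blast
    then have "card (A \<inter> {..kth A c}) < c" unfolding c_def using fin psubset_card_mono by blast
    then show False using kp(2)[of "kth A c"] by simp
  qed
  then show ?thesis using hc c1 by (metis Suc_pred' less_eq_Suc_le One_nat_def)
qed

lemma ball_kth:
  assumes "\<forall>b. finite (A \<inter> {..b})"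
  shows "(\<forall>t\<in>A. P t) \<longleftrightarrow> (\<forall>k. has A (Suc k) \<longrightarrow> P (kth A (Suc k)))"
proof
  assume "\<forall>t\<in>A. P t" then show "\<forall>k. has A (Suc k) \<longrightarrow> P (kth A (Suc k))"
    using kth_props(1)[OF assms, of "Suc _"] by simp
next
  assume H: "\<forall>k. has A (Suc k) \<longrightarrow> P (kth A (Suc k))"
  show "\<forall>t\<in>A. P t"
  proof
    fix t assume "t \<in> A"
    then obtain k where "has A (Suc k)" "kth A (Suc k) = t" using kth_surj[OF assms] by blast
    then show "P t" using H by metis
  qed
qed

lemma bex_kth:
  assumes "\<forall>b. finite (A \<inter> {..b})"
  shows "(\<exists>t\<in>A. P t) \<longleftrightarrow> (\<exists>k. has A (Suc k) \<and> P (kth A (Suc k)))"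
  using ball_kth[OF assms, of "\<lambda>t. \<not> P t"] by blast

lemma meas_kth:
  assumes fin: "\<forall>\<omega>\<in>space M. \<forall>b. finite (A \<omega> \<inter> {..b})"
    and cm: "\<And>v. (\<lambda>\<omega>. real (card (A \<omega> \<inter> {..v}))) \<in> borel_measurable M"
  shows "Measurable.pred M (\<lambda>\<omega>. has (A \<omega>) k)"
    and "(\<lambda>\<omega>. kth (A \<omega>) (Suc k)) \<in> borel_measurable M"
proof -
  have [measurable]: "\<And>v. (\<lambda>\<omega>. real (card (A \<omega> \<inter> {..v}))) \<in> borel_measurable M" by (rule cm)
  have eq: "\<And>k \<omega>. has (A \<omega>) k \<longleftrightarrow> (\<exists>n::nat. real k \<le> real (card (A \<omega> \<inter> {..real n})))"
    unfolding has_def by simp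
  show ph: "Measurable.pred M (\<lambda>\<omega>. has (A \<omega>) k)" for k unfolding eq by measurable
  note [measurable] = ph
  show "(\<lambda>\<omega>. kth (A \<omega>) (Suc k)) \<in> borel_measurable M"
    unfolding borel_measurable_iff_le
  proof
    fix a
    have "{w \<in> space M. kth (A w) (Suc k) \<le> a} =
      {w \<in> space M. (has (A w) (Suc k) \<and> real (Suc k) \<le> real (card (A w \<inter> {..a}))) \<or> (\<not> has (A w) (Suc k) \<and> 0 \<le> a)}"
    proof (rule Collect_cong)
      fix w
      show "(w \<in> space M \<and> kth (A w) (Suc k) \<le> a) \<longleftrightarrow> (w \<in> space M \<and> ((has (A w) (Suc k) \<and> real (Suc k) \<le> real (card (A w \<inter> {..a}))) \<or> (\<not> has (A w) (Suc k) \<and> 0 \<le> a)))"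
      proof (cases "w \<in> space M \<and> has (A w) (Suc k)")
        case True
        then have "\<forall>b. finite (A w \<inter> {..b})" using fin by auto
        from kth_props(2)[OF this _ , of "Suc k" a] True show ?thesis by auto
      qed (auto simp: kth_def)
    qed
    also have "\<dots> \<in> sets M" by measurable
    finally show "{w \<in> space M. kth (A w) (Suc k) \<le> a} \<in> sets M" .
  qed
qed



lemma ppp_rv:
  assumes "ppp_family M I r N" "i \<in> I" "0 \<le> a" "a < b"
  shows "(\<lambda>\<omega>. card (N i \<omega> \<inter> {a<..b})) \<in> measurable M (count_space UNIV)"
proof -
  have P: "prob_space M" using assms(1) ppp_family_def by auto
  have H: "\<forall>J. J \<subseteq> {(i, a, b). i \<in> I \<and> 0 \<le> a \<and> a < b} \<longrightarrow>
        (\<forall>(i, a, b)\<in>J. \<forall>(i', a', b')\<in>J. (i, a, b) \<noteq> (i', a', b') \<longrightarrow> i = i' \<longrightarrow>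
            {a<..b} \<inter> {a'<..b'} = {}) \<longrightarrow>
        prob_space.indep_vars M (\<lambda>_. count_space UNIV)
          (\<lambda>(i, a, b) \<omega>. card (N i \<omega> \<inter> {a<..b})) J"
    using assms(1) unfolding ppp_family_def by blast
  have J1: "{(i,a,b)} \<subseteq> {(i, a, b). i \<in> I \<and> 0 \<le> a \<and> a < b}" using assms by auto
  have J2: "\<forall>(i, a, b)\<in>{(i,a,b)}. \<forall>(i', a', b')\<in>{(i,a,b)}. (i, a, b) \<noteq> (i', a', b') \<longrightarrow> i = i' \<longrightarrow>
            {a<..b} \<inter> {a'<..b'} = {}" by auto
  have "prob_space.indep_vars M (\<lambda>_. count_space UNIV)
          (\<lambda>(i, a, b) \<omega>. card (N i \<omega> \<inter> {a<..b})) {(i,a,b)}"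
    using H J1 J2 by blast
  then show ?thesis unfolding prob_space.indep_vars_def2[OF P] by auto
qed

lemma ppp_prob:
  assumes "ppp_family M I r N" "i \<in> I" "0 \<le> a" "a < b"
  shows "measure M {\<omega> \<in> space M. Q (card (N i \<omega> \<inter> {a<..b}))}
         = measure_pmf.prob (poisson_pmf (r i * (b - a))) {n. Q n}"
proof -
  have d: "distr M (count_space UNIV) (\<lambda>\<omega>. card (N i \<omega> \<inter> {a<..b}))
          = measure_pmf (poisson_pmf (r i * (b - a)))"
    using assms unfolding ppp_family_def by auto
  have "measure M {\<omega> \<in> space M. Q (card (N i \<omega> \<inter> {a<..b}))}
      = measure (distr M (count_space UNIV) (\<lambda>\<omega>. card (N i \<omega> \<inter> {a<..b}))) {n. Q n}"
    by (subst measure_distr[OF ppp_rv[OF assms]]) (auto intro!: arg_cong[where f="measure M"])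
  then show ?thesis using d by simp
qed

lemma ppp_indep2:
  assumes "ppp_family M I r N" "i \<in> I" "i' \<in> I" "i \<noteq> i'" "0 \<le> a" "a < b" "0 \<le> a'" "a' < b'"
  shows "measure M {\<omega> \<in> space M. Q (card (N i \<omega> \<inter> {a<..b})) \<and> Q' (card (N i' \<omega> \<inter> {a'<..b'}))}
       = measure M {\<omega> \<in> space M. Q (card (N i \<omega> \<inter> {a<..b}))} *
         measure M {\<omega> \<in> space M. Q' (card (N i' \<omega> \<inter> {a'<..b'}))}"
proof -
  have P: "prob_space M" using assms(1) ppp_family_def by auto
  define J where "J = {(i,a,b),(i',a',b')}"
  define X where "X = (\<lambda>(i, a, b) \<omega>. card (N i \<omega> \<inter> {a<..b}))"
  define A where "A = (\<lambda>j. if j = (i,a,b) then {n. Q n} else {n. Q' n})"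
  have H: "\<forall>J. J \<subseteq> {(i, a, b). i \<in> I \<and> 0 \<le> a \<and> a < b} \<longrightarrow>
        (\<forall>(i, a, b)\<in>J. \<forall>(i', a', b')\<in>J. (i, a, b) \<noteq> (i', a', b') \<longrightarrow> i = i' \<longrightarrow>
            {a<..b} \<inter> {a'<..b'} = {}) \<longrightarrow>
        prob_space.indep_vars M (\<lambda>_. count_space UNIV)
          (\<lambda>(i, a, b) \<omega>. card (N i \<omega> \<inter> {a<..b})) J"
    using assms(1) unfolding ppp_family_def by blast
  have J1: "J \<subseteq> {(i, a, b). i \<in> I \<and> 0 \<le> a \<and> a < b}" using assms unfolding J_def by auto
  have J2: "\<forall>(i, a, b)\<in>J. \<forall>(i', a', b')\<in>J. (i, a, b) \<noteq> (i', a', b') \<longrightarrow> i = i' \<longrightarrow>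
            {a<..b} \<inter> {a'<..b'} = {}" using assms(4) unfolding J_def by auto
  have ind: "prob_space.indep_vars M (\<lambda>_. count_space UNIV) X J"
    using H J1 J2 unfolding X_def by blast
  have ne: "(i,a,b) \<noteq> (i',a',b')" using assms by auto
  have "measure M (\<Inter>j\<in>J. X j -` A j \<inter> space M) = (\<Prod>j\<in>J. measure M (X j -` A j \<inter> space M))"
    using prob_space.indep_varsD[OF P ind, of J A] unfolding J_def by auto
  moreover have "(\<Inter>j\<in>J. X j -` A j \<inter> space M)
      = {\<omega> \<in> space M. Q (card (N i \<omega> \<inter> {a<..b})) \<and> Q' (card (N i' \<omega> \<inter> {a'<..b'}))}"
    using ne unfolding J_def X_def A_def by auto
  moreover have "(\<Prod>j\<in>J. measure M (X j -` A j \<inter> space M))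
      = measure M (X (i,a,b) -` A (i,a,b) \<inter> space M) * measure M (X (i',a',b') -` A (i',a',b') \<inter> space M)"
    using ne unfolding J_def by simp
  moreover have "X (i,a,b) -` A (i,a,b) \<inter> space M = {\<omega> \<in> space M. Q (card (N i \<omega> \<inter> {a<..b}))}"
    unfolding X_def A_def by auto
  moreover have "X (i',a',b') -` A (i',a',b') \<inter> space M = {\<omega> \<in> space M. Q' (card (N i' \<omega> \<inter> {a'<..b'}))}"
    using ne unfolding X_def A_def by auto
  ultimately show ?thesis by simp
qed

lemma poisson0:
  assumes "0 < \<mu>"
  shows "measure_pmf.prob (poisson_pmf \<mu>) {n. n = 0} = exp (- \<mu>)"
  using assms by (simp add: measure_pmf_single)

lemma poisson_ge1:
  assumes "0 < \<mu>"
  shows "measure_pmf.prob (poisson_pmf \<mu>) {n. 1 \<le> n} \<le> \<mu>"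
proof -
  have "{n::nat. 1 \<le> n} = UNIV - {0}" by auto
  then have "measure_pmf.prob (poisson_pmf \<mu>) {n. 1 \<le> n} = 1 - exp (- \<mu>)"
    using assms measure_pmf.prob_compl[of "{0}" "poisson_pmf \<mu>"] by (simp add: measure_pmf_single)
  also have "\<dots> \<le> \<mu>" using exp_ge_add_one_self[of "-\<mu>"] by simp
  finally show ?thesis .
qed

lemma poisson_ge2:
  assumes "0 < \<mu>"
  shows "measure_pmf.prob (poisson_pmf \<mu>) {n. 2 \<le> n} \<le> \<mu>^2"
proof -
  have "{n::nat. 2 \<le> n} = UNIV - {0,1}" by auto
  then have "measure_pmf.prob (poisson_pmf \<mu>) {n. 2 \<le> n} = 1 - (exp (- \<mu>) + \<mu> * exp (- \<mu>))"
    using assms measure_pmf.prob_compl[of "{0,1}" "poisson_pmf \<mu>"] by (simp add: measure_measure_pmf_finite)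
  also have "\<dots> \<le> \<mu>^2"
  proof -
    have "1 - \<mu> \<le> exp (- \<mu>)" using exp_ge_add_one_self[of "-\<mu>"] by simp
    then have "(1 - \<mu>) * (1 + \<mu>) \<le> exp (- \<mu>) * (1 + \<mu>)" using assms by (intro mult_right_mono) auto
    then show ?thesis by (simp add: algebra_simps power2_eq_square)
  qed
  finally show ?thesis .
qed



lemma S_equiv:
  assumes fO: "\<And>y. y \<in> V \<Longrightarrow> \<forall>b. finite (Oy y \<inter> {..b})" and fR: "\<forall>b. finite (R \<inter> {..b})"
    and x: "x \<in> V"
  shows "(\<forall>t\<in>Oy x. t \<le> T \<longrightarrow> (\<exists>t'>t. t' \<in> R \<and> (\<forall>y\<in>V. Oy y \<inter> {t<..t'} = {}))) \<longleftrightarrow>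
    (\<forall>k. has (Oy x) (Suc k) \<longrightarrow> kth (Oy x) (Suc k) \<le> T \<longrightarrow>
      (\<exists>j. has R (Suc j) \<and> kth (Oy x) (Suc k) < kth R (Suc j) \<and>
        (\<forall>y\<in>V. \<forall>i. has (Oy y) (Suc i) \<longrightarrow>
           \<not> (kth (Oy x) (Suc k) < kth (Oy y) (Suc i) \<and> kth (Oy y) (Suc i) \<le> kth R (Suc j)))))"
proof -
  have e1: "(\<forall>y\<in>V. Oy y \<inter> {t<..t'} = {}) \<longleftrightarrow>
      (\<forall>y\<in>V. \<forall>i. has (Oy y) (Suc i) \<longrightarrow> \<not> (t < kth (Oy y) (Suc i) \<and> kth (Oy y) (Suc i) \<le> t'))" for t t'
  proof -
    have "Oy y \<inter> {t<..t'} = {} \<longleftrightarrow> (\<forall>u\<in>Oy y. \<not> (t < u \<and> u \<le> t'))" for y by auto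
    then show ?thesis using ball_kth[OF fO, of _ "\<lambda>u. \<not> (t < u \<and> u \<le> t')"] by auto
  qed
  have e2: "(\<exists>t'>t. t' \<in> R \<and> (\<forall>y\<in>V. Oy y \<inter> {t<..t'} = {})) \<longleftrightarrow>
      (\<exists>j. has R (Suc j) \<and> t < kth R (Suc j) \<and>
        (\<forall>y\<in>V. \<forall>i. has (Oy y) (Suc i) \<longrightarrow> \<not> (t < kth (Oy y) (Suc i) \<and> kth (Oy y) (Suc i) \<le> kth R (Suc j))))" for t
  proof -
    have "(\<exists>t'>t. t' \<in> R \<and> (\<forall>y\<in>V. Oy y \<inter> {t<..t'} = {})) \<longleftrightarrow>
          (\<exists>t'\<in>R. t < t' \<and> (\<forall>y\<in>V. Oy y \<inter> {t<..t'} = {}))" by auto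
    also have "\<dots> \<longleftrightarrow> (\<exists>j. has R (Suc j) \<and> t < kth R (Suc j) \<and> (\<forall>y\<in>V. Oy y \<inter> {t<..kth R (Suc j)} = {}))"
      by (rule bex_kth[OF fR])
    finally show ?thesis unfolding e1 .
  qed
  show ?thesis unfolding e2 using ball_kth[OF fO[OF x]] by auto
qed

lemma main_meas:
  fixes V :: "'v set" and E and lam \<tau> T :: real and M :: "'w measure" and N :: "'v fibre \<Rightarrow> 'w \<Rightarrow> real set"
  assumes fg: "finite_graph V E" and gr: "graphical_rep M V E lam \<tau> N"
  shows "{\<omega> \<in> space M. \<forall>x\<in>V. \<forall>t\<in>N (Ons x) \<omega>. t \<le> T \<longrightarrow>
               (\<exists>t'>t. t' \<in> N (Rec x) \<omega> \<and> (\<forall>y\<in>V. N (Ons y) \<omega> \<inter> {t<..t'} = {}))} \<in> sets M"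
proof -
  define I where "I = Rec ` V \<union> Ons ` V \<union> Tr ` E"
  define r :: "'v fibre \<Rightarrow> real" where "r = (\<lambda>i. case i of Rec _ \<Rightarrow> \<tau> | Ons _ \<Rightarrow> 1 | Tr _ \<Rightarrow> lam * \<tau>)"
  have pp: "ppp_family M I r N" using gr unfolding graphical_rep_def I_def r_def by simp
  have finV: "finite V" using fg finite_graph_def by auto
  have sub: "\<And>i \<omega>. i \<in> I \<Longrightarrow> \<omega> \<in> space M \<Longrightarrow> N i \<omega> \<subseteq> {0<..}"
    and fin: "\<And>i \<omega>. i \<in> I \<Longrightarrow> \<omega> \<in> space M \<Longrightarrow> \<forall>b. finite (N i \<omega> \<inter> {..b})"
    using pp unfolding ppp_family_def by auto
  have cm: "(\<lambda>\<omega>. real (card (N i \<omega> \<inter> {..v}))) \<in> borel_measurable M" if i: "i \<in> I" for i v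
  proof (cases "v \<le> 0")
    case True
    have "(\<lambda>\<omega>. real (card (N i \<omega> \<inter> {..v}))) \<in> borel_measurable M \<longleftrightarrow> (\<lambda>\<omega>. 0::real) \<in> borel_measurable M"
    proof (rule measurable_cong)
      fix w assume "w \<in> space M"
      then have "N i w \<inter> {..v} = {}" using sub[OF i] True by fastforce
      then show "real (card (N i w \<inter> {..v})) = 0" by simp
    qed
    then show ?thesis by simp
  next
    case False
    have "(\<lambda>\<omega>. real (card (N i \<omega> \<inter> {..v}))) \<in> borel_measurable M \<longleftrightarrow>
          (\<lambda>\<omega>. real (card (N i \<omega> \<inter> {0<..v}))) \<in> borel_measurable M"
    proof (rule measurable_cong)
      fix w assume "w \<in> space M"
      then have "N i w \<inter> {..v} = N i w \<inter> {0<..v}" using sub[OF i] by fastforce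
      then show "real (card (N i w \<inter> {..v})) = real (card (N i w \<inter> {0<..v}))" by simp
    qed
    moreover have "(\<lambda>\<omega>. real (card (N i \<omega> \<inter> {0<..v}))) \<in> borel_measurable M"
      using measurable_compose[OF ppp_rv[OF pp i, of 0 v], of real borel] False by simp
    ultimately show ?thesis by simp
  qed
  have finw: "\<forall>\<omega>\<in>space M. \<forall>b. finite (N i \<omega> \<inter> {..b})" if "i \<in> I" for i using fin that by auto
  have mk1: "Measurable.pred M (\<lambda>\<omega>. has (N i \<omega>) k)" if "i \<in> I" for i k
    using meas_kth(1)[OF finw[OF that] cm[OF that]] .
  have mk2: "(\<lambda>\<omega>. kth (N i \<omega>) (Suc k)) \<in> borel_measurable M" if "i \<in> I" for i k
    using meas_kth(2)[OF finw[OF that] cm[OF that]] .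
  define Ph where "Ph = (\<lambda>x \<omega>. \<forall>k. has (N (Ons x) \<omega>) (Suc k) \<longrightarrow> kth (N (Ons x) \<omega>) (Suc k) \<le> T \<longrightarrow>
      (\<exists>j. has (N (Rec x) \<omega>) (Suc j) \<and> kth (N (Ons x) \<omega>) (Suc k) < kth (N (Rec x) \<omega>) (Suc j) \<and>
        (\<forall>y\<in>V. \<forall>i. has (N (Ons y) \<omega>) (Suc i) \<longrightarrow>
           \<not> (kth (N (Ons x) \<omega>) (Suc k) < kth (N (Ons y) \<omega>) (Suc i) \<and> kth (N (Ons y) \<omega>) (Suc i) \<le> kth (N (Rec x) \<omega>) (Suc j)))))"
  have inner: "Measurable.pred M (\<lambda>\<omega>. \<forall>i. has (N (Ons y) \<omega>) (Suc i) \<longrightarrow>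
           \<not> (kth (N (Ons x) \<omega>) (Suc k) < kth (N (Ons y) \<omega>) (Suc i) \<and> kth (N (Ons y) \<omega>) (Suc i) \<le> kth (N (Rec x) \<omega>) (Suc j)))"
    if "x \<in> V" "y \<in> V" for x y j k
  proof -
    have i1: "Ons x \<in> I" "Ons y \<in> I" "Rec x \<in> I" using that I_def by auto
    note [measurable] = mk1[OF i1(1)] mk2[OF i1(1)] mk1[OF i1(2)] mk2[OF i1(2)] mk1[OF i1(3)] mk2[OF i1(3)]
    show ?thesis by measurable
  qed
  have px: "Measurable.pred M (Ph x)" if x: "x \<in> V" for x
  proof -
    have i1: "Ons x \<in> I" "Rec x \<in> I" using that I_def by auto
    note [measurable] = mk1[OF i1(1)] mk2[OF i1(1)] mk1[OF i1(2)] mk2[OF i1(2)]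
    have [measurable]: "Measurable.pred M (\<lambda>\<omega>. \<forall>y\<in>V. \<forall>i. has (N (Ons y) \<omega>) (Suc i) \<longrightarrow>
           \<not> (kth (N (Ons x) \<omega>) (Suc k) < kth (N (Ons y) \<omega>) (Suc i) \<and> kth (N (Ons y) \<omega>) (Suc i) \<le> kth (N (Rec x) \<omega>) (Suc j)))" for j k
      by (rule pred_intros_finite(3)[OF finV]) (rule inner[OF x])
    show ?thesis unfolding Ph_def by measurable
  qed
  have "Measurable.pred M (\<lambda>\<omega>. \<forall>x\<in>V. Ph x \<omega>)"
    by (rule pred_intros_finite(3)[OF finV]) (rule px)
  then have "{\<omega> \<in> space M. \<forall>x\<in>V. Ph x \<omega>} \<in> sets M" unfolding pred_def .
  moreover have "{\<omega> \<in> space M. \<forall>x\<in>V. \<forall>t\<in>N (Ons x) \<omega>. t \<le> T \<longrightarrow>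
               (\<exists>t'>t. t' \<in> N (Rec x) \<omega> \<and> (\<forall>y\<in>V. N (Ons y) \<omega> \<inter> {t<..t'} = {}))}
      = {\<omega> \<in> space M. \<forall>x\<in>V. Ph x \<omega>}"
  proof (rule Collect_cong)
    fix \<omega>
    show "(\<omega> \<in> space M \<and> (\<forall>x\<in>V. \<forall>t\<in>N (Ons x) \<omega>. t \<le> T \<longrightarrow>
               (\<exists>t'>t. t' \<in> N (Rec x) \<omega> \<and> (\<forall>y\<in>V. N (Ons y) \<omega> \<inter> {t<..t'} = {})))) \<longleftrightarrow>
          (\<omega> \<in> space M \<and> (\<forall>x\<in>V. Ph x \<omega>))"
    proof (cases "\<omega> \<in> space M")
      case True
      have fO: "\<And>y. y \<in> V \<Longrightarrow> \<forall>b. finite (N (Ons y) \<omega> \<inter> {..b})" using fin True I_def by auto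
      have fR: "\<And>x. x \<in> V \<Longrightarrow> \<forall>b. finite (N (Rec x) \<omega> \<inter> {..b})" using fin True I_def by auto
      show ?thesis unfolding Ph_def using S_equiv[where Oy="\<lambda>y. N (Ons y) \<omega>", OF fO fR] True by auto
    qed simp
  qed
  ultimately show ?thesis by simp
qed



lemma cnt_sets:
  assumes "ppp_family M I r N" "i \<in> I" "0 \<le> a" "a < b"
  shows "{\<omega> \<in> space M. Q (card (N i \<omega> \<inter> {a<..b}))} \<in> sets M"
proof -
  have "{\<omega> \<in> space M. Q (card (N i \<omega> \<inter> {a<..b}))} = (\<lambda>\<omega>. card (N i \<omega> \<inter> {a<..b})) -` {n. Q n} \<inter> space M"
    by auto
  moreover have "(\<lambda>\<omega>. card (N i \<omega> \<inter> {a<..b})) -` {n. Q n} \<inter> space M \<in> sets M"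
    by (rule measurable_sets[OF ppp_rv[OF assms]]) simp
  ultimately show ?thesis by simp
qed

lemma main_bound:
  fixes V :: "'v set" and E and lam \<tau> T :: real and M :: "'w measure" and N :: "'v fibre \<Rightarrow> 'w \<Rightarrow> real set"
  assumes fg: "finite_graph V E" and tau: "\<tau> > 0" and T: "T > 0" and gr: "graphical_rep M V E lam \<tau> N"
  defines "S \<equiv> {\<omega> \<in> space M. \<forall>x\<in>V. \<forall>t\<in>N (Ons x) \<omega>. t \<le> T \<longrightarrow>
               (\<exists>t'>t. t' \<in> N (Rec x) \<omega> \<and> (\<forall>y\<in>V. N (Ons y) \<omega> \<inter> {t<..t'} = {}))}"
  shows "1 - (real (nat \<lceil>T * sqrt \<tau>\<rceil>) + 1) * (real (card V) * real (card V)) * (exp (- sqrt \<tau>) + 4 / \<tau>) \<le> measure M S"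
proof -
  define I where "I = Rec ` V \<union> Ons ` V \<union> Tr ` E"
  define r :: "'v fibre \<Rightarrow> real" where "r = (\<lambda>i. case i of Rec _ \<Rightarrow> \<tau> | Ons _ \<Rightarrow> 1 | Tr _ \<Rightarrow> lam * \<tau>)"
  have pp: "ppp_family M I r N" using gr unfolding graphical_rep_def I_def r_def by simp
  have P: "prob_space M" using pp ppp_family_def by auto
  have finV: "finite V" using fg finite_graph_def by auto
  have sub: "\<And>i \<omega>. i \<in> I \<Longrightarrow> \<omega> \<in> space M \<Longrightarrow> N i \<omega> \<subseteq> {0<..}"
    and fin: "\<And>i \<omega> b. i \<in> I \<Longrightarrow> \<omega> \<in> space M \<Longrightarrow> finite (N i \<omega> \<inter> {..b})"
    using pp unfolding ppp_family_def by auto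
  have finI: "\<And>i \<omega> a b. i \<in> I \<Longrightarrow> \<omega> \<in> space M \<Longrightarrow> finite (N i \<omega> \<inter> {a<..b})"
    using fin by (metis (no_types, lifting) Int_mono finite_subset greaterThanAtMost_iff atMost_iff order_refl subsetI)
  have SM: "S \<in> sets M" unfolding S_def by (rule main_meas[OF fg gr])
  define h where "h = 1 / sqrt \<tau>"
  have hpos: "h > 0" using tau h_def by simp
  have th: "\<tau> * h = sqrt \<tau>" using tau unfolding h_def by (simp add: field_simps real_sqrt_mult[symmetric])
  have h2: "(2 * h)^2 = 4 / \<tau>" using tau unfolding h_def by (simp add: power2_eq_square field_simps)
  define K where "K = nat \<lceil>T * sqrt \<tau>\<rceil>"
  define Ev where "Ev = (\<lambda>(k::nat, x::'v, y::'v).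
      {\<omega> \<in> space M. card (N (Rec x) \<omega> \<inter> {(real k + 1) * h<..(real k + 2) * h}) = 0} \<union>
      (if x = y then {\<omega> \<in> space M. 2 \<le> card (N (Ons x) \<omega> \<inter> {real k * h<..(real k + 2) * h})}
       else {\<omega> \<in> space M. 1 \<le> card (N (Ons x) \<omega> \<inter> {real k * h<..(real k + 2) * h}) \<and>
                          1 \<le> card (N (Ons y) \<omega> \<inter> {real k * h<..(real k + 2) * h})}))"
  define U where "U = {..K} \<times> V \<times> V"
  have ivl1: "0 \<le> (real k + 1) * h" "(real k + 1) * h < (real k + 2) * h" for k using hpos by auto
  have ivl0: "0 \<le> real k * h" "real k * h < (real k + 2) * h" for k using hpos by auto
  have EvM: "Ev p \<in> sets M" if "p \<in> U" for p
  proof -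
    obtain k x y where p: "p = (k,x,y)" by (cases p) auto
    have xy: "Rec x \<in> I" "Ons x \<in> I" "Ons y \<in> I" using that p U_def I_def by auto
    have A: "{\<omega> \<in> space M. card (N (Rec x) \<omega> \<inter> {(real k + 1) * h<..(real k + 2) * h}) = 0} \<in> sets M"
      by (rule cnt_sets[OF pp xy(1) ivl1])
    have B1: "{\<omega> \<in> space M. 2 \<le> card (N (Ons x) \<omega> \<inter> {real k * h<..(real k + 2) * h})} \<in> sets M"
      by (rule cnt_sets[OF pp xy(2) ivl0])
    have "{\<omega> \<in> space M. 1 \<le> card (N (Ons x) \<omega> \<inter> {real k * h<..(real k + 2) * h}) \<and>
                          1 \<le> card (N (Ons y) \<omega> \<inter> {real k * h<..(real k + 2) * h})} =
          {\<omega> \<in> space M. 1 \<le> card (N (Ons x) \<omega> \<inter> {real k * h<..(real k + 2) * h})} \<inter>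
          {\<omega> \<in> space M. 1 \<le> card (N (Ons y) \<omega> \<inter> {real k * h<..(real k + 2) * h})}" by blast
    moreover have "\<dots> \<in> sets M"
      by (intro sets.Int cnt_sets[OF pp xy(2) ivl0] cnt_sets[OF pp xy(3) ivl0])
    ultimately show ?thesis unfolding p Ev_def using A B1 by auto
  qed
  have EvB: "measure M (Ev p) \<le> exp (- sqrt \<tau>) + 4 / \<tau>" if "p \<in> U" for p
  proof -
    obtain k x y where p: "p = (k,x,y)" by (cases p) auto
    have xy: "Rec x \<in> I" "Ons x \<in> I" "Ons y \<in> I" using that p U_def I_def by auto
    have rR: "r (Rec x) * ((real k + 2) * h - (real k + 1) * h) = sqrt \<tau>"
      using th unfolding r_def by (simp add: algebra_simps)
    have rO: "r (Ons z) * ((real k + 2) * h - real k * h) = 2 * h" for z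
      unfolding r_def by (simp add: algebra_simps)
    define A where "A = {\<omega> \<in> space M. card (N (Rec x) \<omega> \<inter> {(real k + 1) * h<..(real k + 2) * h}) = 0}"
    define B where "B = (if x = y then {\<omega> \<in> space M. 2 \<le> card (N (Ons x) \<omega> \<inter> {real k * h<..(real k + 2) * h})}
       else {\<omega> \<in> space M. 1 \<le> card (N (Ons x) \<omega> \<inter> {real k * h<..(real k + 2) * h}) \<and>
                          1 \<le> card (N (Ons y) \<omega> \<inter> {real k * h<..(real k + 2) * h})})"
    have EAB: "Ev p = A \<union> B" unfolding p Ev_def A_def B_def by simp
    have AM: "A \<in> sets M" unfolding A_def by (rule cnt_sets[OF pp xy(1) ivl1])
    have BM: "B \<in> sets M"
    proof (cases "x = y")
      case True then show ?thesis unfolding B_def using cnt_sets[OF pp xy(2) ivl0] by simp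
    next
      case False
      have "B = {\<omega> \<in> space M. 1 \<le> card (N (Ons x) \<omega> \<inter> {real k * h<..(real k + 2) * h})} \<inter>
          {\<omega> \<in> space M. 1 \<le> card (N (Ons y) \<omega> \<inter> {real k * h<..(real k + 2) * h})}"
        unfolding B_def if_not_P[OF False] by blast
      also have "\<dots> \<in> sets M"
        by (intro sets.Int cnt_sets[OF pp xy(2) ivl0] cnt_sets[OF pp xy(3) ivl0])
      finally show ?thesis .
    qed
    have mA: "measure M A = exp (- sqrt \<tau>)"
      unfolding A_def using ppp_prob[OF pp xy(1) ivl1, of "\<lambda>n. n = 0"] poisson0[of "sqrt \<tau>"] rR tau by simp
    have p1: "measure M {\<omega> \<in> space M. 1 \<le> card (N (Ons z) \<omega> \<inter> {real k * h<..(real k + 2) * h})} \<le> 2 * h"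
      if "Ons z \<in> I" for z
      using ppp_prob[OF pp that ivl0, of "\<lambda>n. 1 \<le> n"] poisson_ge1[of "2*h"] rO[of z] hpos by simp
    have mB: "measure M B \<le> 4 / \<tau>"
    proof (cases "x = y")
      case True
      then show ?thesis
        unfolding B_def using ppp_prob[OF pp xy(2) ivl0, of "\<lambda>n. 2 \<le> n"] poisson_ge2[of "2*h"] rO[of x] hpos h2 by simp
    next
      case False
      then have "measure M B = measure M {\<omega> \<in> space M. 1 \<le> card (N (Ons x) \<omega> \<inter> {real k * h<..(real k + 2) * h})}
          * measure M {\<omega> \<in> space M. 1 \<le> card (N (Ons y) \<omega> \<inter> {real k * h<..(real k + 2) * h})}"
        unfolding B_def using ppp_indep2[OF pp xy(2) xy(3) _ ivl0 ivl0] by simp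
      also have "\<dots> \<le> (2 * h) * (2 * h)"
        using p1[OF xy(2)] p1[OF xy(3)] hpos by (intro mult_mono) auto
      finally show ?thesis using h2 by (simp add: power2_eq_square)
    qed
    have "measure M (Ev p) \<le> measure M A + measure M B" unfolding EAB by (rule measure_Un_le[OF AM BM])
    then show ?thesis using mA mB by simp
  qed
  have cover: "space M - S \<subseteq> (\<Union>p\<in>U. Ev p)"
  proof
    fix \<omega> assume w: "\<omega> \<in> space M - S"
    then have wM: "\<omega> \<in> space M" by simp
    from w obtain x t where x: "x \<in> V" and t: "t \<in> N (Ons x) \<omega>" and tT: "t \<le> T"
      and nt: "\<not> (\<exists>t'>t. t' \<in> N (Rec x) \<omega> \<and> (\<forall>y\<in>V. N (Ons y) \<omega> \<inter> {t<..t'} = {}))"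
      unfolding S_def by auto
    have xI: "Rec x \<in> I" "Ons x \<in> I" using x I_def by auto
    have tpos: "t > 0" using sub[OF xI(2) wM] t by auto
    define q where "q = t * sqrt \<tau>"
    have qpos: "q > 0" using tpos tau q_def by simp
    have tq: "t = q * h" unfolding q_def h_def using tau by simp
    have c1: "1 \<le> \<lceil>q\<rceil>" using qpos by (simp add: zero_less_ceiling)
    obtain k :: nat where ik: "int k = \<lceil>q\<rceil> - 1" using c1 by (metis diff_ge_0_iff_ge nonneg_int_cases)
    have "real_of_int (int k) = real_of_int (\<lceil>q\<rceil> - 1)" using ik by simp
    then have rk: "real k = real_of_int \<lceil>q\<rceil> - 1" by simp
    have qc: "real_of_int \<lceil>q\<rceil> - 1 < q" "q \<le> real_of_int \<lceil>q\<rceil>" using ceiling_correct by auto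
    have lo: "real k * h < t" using qc(1) rk hpos tq by (simp add: mult_strict_right_mono)
    have hi: "t \<le> (real k + 1) * h" using qc(2) rk hpos tq by (simp add: mult_right_mono)
    have kK: "k \<le> K"
    proof -
      have "q \<le> T * sqrt \<tau>" unfolding q_def using tT tau by (simp add: mult_right_mono)
      then have "\<lceil>q\<rceil> \<le> \<lceil>T * sqrt \<tau>\<rceil>" by (rule ceiling_mono)
      then have "int k \<le> \<lceil>T * sqrt \<tau>\<rceil>" using ik by linarith
      then show ?thesis unfolding K_def by (metis nat_int nat_mono)
    qed
    show "\<omega> \<in> (\<Union>p\<in>U. Ev p)"
    proof (cases "card (N (Rec x) \<omega> \<inter> {(real k + 1) * h<..(real k + 2) * h}) = 0")
      case True
      then have "\<omega> \<in> Ev (k,x,x)" unfolding Ev_def using wM by simp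
      moreover have "(k,x,x) \<in> U" unfolding U_def using kK x by simp
      ultimately show ?thesis by blast
    next
      case False
      then obtain t' where t': "t' \<in> N (Rec x) \<omega>" "(real k + 1) * h < t'" "t' \<le> (real k + 2) * h"
        by (metis card.empty disjoint_iff greaterThanAtMost_iff)
      have tt': "t < t'" using hi t'(2) by simp
      then obtain y where y: "y \<in> V" and ne: "N (Ons y) \<omega> \<inter> {t<..t'} \<noteq> {}" using nt t'(1) by blast
      then obtain u where u: "u \<in> N (Ons y) \<omega>" "t < u" "u \<le> t'" by auto
      have yI: "Ons y \<in> I" using y I_def by auto
      have tJ: "t \<in> N (Ons x) \<omega> \<inter> {real k * h<..(real k + 2) * h}" using t lo hi hpos by (simp add: algebra_simps)
      have uJ: "u \<in> N (Ons y) \<omega> \<inter> {real k * h<..(real k + 2) * h}" using u lo t' by simp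
      have "\<omega> \<in> Ev (k,x,y)"
      proof (cases "x = y")
        case True
        have "{t,u} \<subseteq> N (Ons x) \<omega> \<inter> {real k * h<..(real k + 2) * h}" using tJ uJ True by auto
        then have "card {t,u} \<le> card (N (Ons x) \<omega> \<inter> {real k * h<..(real k + 2) * h})"
          by (rule card_mono[OF finI[OF xI(2) wM]])
        moreover have "card {t,u} = 2" using u(2) by simp
        ultimately show ?thesis unfolding Ev_def using True wM by simp
      next
        case False
        have "1 \<le> card (N (Ons x) \<omega> \<inter> {real k * h<..(real k + 2) * h})"
          using tJ finI[OF xI(2) wM] by (metis One_nat_def Suc_leI card_gt_0_iff empty_iff)
        moreover have "1 \<le> card (N (Ons y) \<omega> \<inter> {real k * h<..(real k + 2) * h})"
          using uJ finI[OF yI wM] by (metis One_nat_def Suc_leI card_gt_0_iff empty_iff)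
        ultimately show ?thesis unfolding Ev_def using False wM by simp
      qed
      moreover have "(k,x,y) \<in> U" unfolding U_def using kK x y by simp
      ultimately show ?thesis by blast
    qed
  qed
  have finU: "finite U" unfolding U_def using finV by simp
  have cardU: "card U = (K + 1) * (card V * card V)" unfolding U_def by (simp add: card_cartesian_product)
  have "measure M (space M - S) \<le> measure M (\<Union>p\<in>U. Ev p)"
    using cover EvM finU by (intro finite_measure.finite_measure_mono[OF prob_space.axioms(1)[OF P]]) auto
  also have "\<dots> \<le> (\<Sum>p\<in>U. measure M (Ev p))" using measure_UNION_le[OF finU EvM] by simp
  also have "\<dots> \<le> real (card U) * (exp (- sqrt \<tau>) + 4 / \<tau>)" using sum_bounded_above[of U, OF EvB] by simp
  also have "\<dots> = (real K + 1) * (real (card V) * real (card V)) * (exp (- sqrt \<tau>) + 4 / \<tau>)"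
    unfolding cardU by (simp add: algebra_simps)
  finally have "measure M (space M - S) \<le> (real K + 1) * (real (card V) * real (card V)) * (exp (- sqrt \<tau>) + 4 / \<tau>)" .
  moreover have "measure M (space M - S) = 1 - measure M S" using prob_space.prob_compl[OF P SM] .
  ultimately show ?thesis unfolding K_def by simp
qed



theorem lemma1:
  fixes V :: "'v set" and E :: "'v set set" and lam T :: real
    and M :: "real \<Rightarrow> 'w measure"
    and N :: "real \<Rightarrow> 'v fibre \<Rightarrow> 'w \<Rightarrow> real set"
  assumes "finite_graph V E" and "lam > 0" and "T > 0"
    and "\<forall>\<tau>>0. graphical_rep (M \<tau>) V E lam \<tau> (N \<tau>)"
  shows "((\<lambda>\<tau>. measure (M \<tau>)
            {\<omega> \<in> space (M \<tau>). \<forall>x\<in>V. \<forall>t\<in>N \<tau> (Ons x) \<omega>. t \<le> T \<longrightarrow>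
               (\<exists>t'>t. t' \<in> N \<tau> (Rec x) \<omega> \<and> (\<forall>y\<in>V. N \<tau> (Ons y) \<omega> \<inter> {t<..t'} = {}))})
          \<longlongrightarrow> 1) at_top"
proof -
  define c where "c = real (card V) * real (card V)"
  have c0: "c \<ge> 0" unfolding c_def by simp
  define g where "g = (\<lambda>\<tau>::real. 1 - c * (T * (sqrt \<tau> * exp (- sqrt \<tau>) + 4 * sqrt \<tau> / \<tau>) + (2 * exp (- sqrt \<tau>) + 8 / \<tau>)))"
  have a: "((\<lambda>\<tau>::real. sqrt \<tau> * exp (- sqrt \<tau>) + 4 * sqrt \<tau> / \<tau>) \<longlongrightarrow> 0) at_top" by real_asymp
  have b: "((\<lambda>\<tau>::real. 2 * exp (- sqrt \<tau>) + 8 / \<tau>) \<longlongrightarrow> 0) at_top" by real_asymp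
  have g1: "(g \<longlongrightarrow> 1) at_top"
  proof -
    have ab: "((\<lambda>\<tau>::real. T * (sqrt \<tau> * exp (- sqrt \<tau>) + 4 * sqrt \<tau> / \<tau>) + (2 * exp (- sqrt \<tau>) + 8 / \<tau>)) \<longlongrightarrow> 0) at_top"
      using tendsto_add[OF tendsto_mult_right_zero[OF a, of T] b] by simp
    show ?thesis unfolding g_def using tendsto_diff[OF tendsto_const[of 1] tendsto_mult_right_zero[OF ab, of c]]
      by simp
  qed
  let ?f = "\<lambda>\<tau>. measure (M \<tau>)
            {\<omega> \<in> space (M \<tau>). \<forall>x\<in>V. \<forall>t\<in>N \<tau> (Ons x) \<omega>. t \<le> T \<longrightarrow>
               (\<exists>t'>t. t' \<in> N \<tau> (Rec x) \<omega> \<and> (\<forall>y\<in>V. N \<tau> (Ons y) \<omega> \<inter> {t<..t'} = {}))}"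
  have lo: "\<forall>\<^sub>F \<tau> in at_top. g \<tau> \<le> ?f \<tau>"
    using eventually_gt_at_top[of 0]
  proof eventually_elim
    case (elim \<tau>)
    have gr: "graphical_rep (M \<tau>) V E lam \<tau> (N \<tau>)" using assms(4) elim by simp
    note mb = main_bound[OF assms(1) elim assms(3) gr]
    have x0: "T * sqrt \<tau> \<ge> 0" using assms(3) elim by simp
    have "real (nat \<lceil>T * sqrt \<tau>\<rceil>) \<le> T * sqrt \<tau> + 1"
      using ceiling_correct[of "T * sqrt \<tau>"] x0 by linarith
    then have "(real (nat \<lceil>T * sqrt \<tau>\<rceil>) + 1) * c * (exp (- sqrt \<tau>) + 4 / \<tau>)
        \<le> (T * sqrt \<tau> + 2) * c * (exp (- sqrt \<tau>) + 4 / \<tau>)"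
      using c0 elim by (intro mult_right_mono) auto
    also have "\<dots> = c * (T * (sqrt \<tau> * exp (- sqrt \<tau>) + 4 * sqrt \<tau> / \<tau>) + (2 * exp (- sqrt \<tau>) + 8 / \<tau>))"
      by (simp add: algebra_simps)
    finally show ?case using mb unfolding g_def c_def by simp
  qed
  have hi: "\<forall>\<^sub>F \<tau> in at_top. ?f \<tau> \<le> 1"
    using eventually_gt_at_top[of 0]
  proof eventually_elim
    case (elim \<tau>)
    have gr: "graphical_rep (M \<tau>) V E lam \<tau> (N \<tau>)" using assms(4) elim by simp
    then have "prob_space (M \<tau>)" unfolding graphical_rep_def ppp_family_def by simp
    then show ?case by (rule prob_space.prob_le_1)
  qed
  show ?thesis by (rule tendsto_sandwich[OF lo hi g1 tendsto_const])
qed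


end
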